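(* Let $(V,\langle\cdot,\cdot\rangle)$ be a pseudo-Euclidean real vector space of signature $(k,l)$ with $k\ge2$, $l\ge2$, and let $Z\subseteq V$ be a subspace. The following are equivalent: (i) $q^+(Z)=k$; (ii) every positive $(k-1)$-plane $H\subseteq V$ is $Z$-extendable; (iii) every positive $(k-1)$-plane $H\subseteq V$ is $Z$-orthogonally-extendable.
   Context: A pseudo-Euclidean space of signature $(k,l)$ is a finite-dimensional real vector space with a symmetric non-degenerate bilinear form whose Sylvester diagonal form has $k$ entries $+1$ and $l$ entries $-1$. For a subspace $L$, $q^+(L)$ denotes the number of $+1$'s in a diagonalization of the restriction of the form to $L$, and $L^\perp$ is the orthogonal complement. A positive $r$-plane is an $r$-dimensional subspace on which the form is positive definite. For a subspace $Z$ and a positive $(k-1)$-plane $H$: $H$ is $Z$-extendable if there is $z\in Z$ with $H+\mathbb{R}z$ a positive $k$-plane; $H$ is $Z$-orthogonally-extendable if there is $z\in Z\cap H^\perp$ with $H+\mathbb{R}z$ a positive $k$-plane. *)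

theory Defs
  imports "HOL-Analysis.Analysis"
begin

text \<open>A pseudo-Euclidean space is modelled as a finite-dimensional real vector space
(a type of class euclidean_space; its own inner product is not used) together with a
symmetric non-degenerate bilinear form B.\<close>

definition sym_form :: "('a::real_vector \<Rightarrow> 'a \<Rightarrow> real) \<Rightarrow> bool" where
  "sym_form B \<longleftrightarrow> (\<forall>x y. B x y = B y x)"

definition nondegenerate :: "('a::real_vector \<Rightarrow> 'a \<Rightarrow> real) \<Rightarrow> bool" where
  "nondegenerate B \<longleftrightarrow> (\<forall>x. (\<forall>y. B x y = 0) \<longrightarrow> x = 0)"

definition diag_basis :: "('a::real_vector \<Rightarrow> 'a \<Rightarrow> real) \<Rightarrow> 'a set \<Rightarrow> 'a set \<Rightarrow> bool" where
  "diag_basis B L E \<longleftrightarrow> finite E \<and> independent E \<and> span E = L \<and>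
     (\<forall>e\<in>E. \<forall>f\<in>E. e \<noteq> f \<longrightarrow> B e f = 0) \<and> (\<forall>e\<in>E. B e e \<in> {1, -1, 0})"

text \<open>Number of +1 (resp. -1) entries in a diagonalization of B restricted to L
(well defined by Sylvester's law of inertia).\<close>

definition qplus :: "('a::real_vector \<Rightarrow> 'a \<Rightarrow> real) \<Rightarrow> 'a set \<Rightarrow> nat" where
  "qplus B L = card {e \<in> (SOME E. diag_basis B L E). B e e = 1}"

definition qminus :: "('a::real_vector \<Rightarrow> 'a \<Rightarrow> real) \<Rightarrow> 'a set \<Rightarrow> nat" where
  "qminus B L = card {e \<in> (SOME E. diag_basis B L E). B e e = -1}"

definition orth_compl :: "('a::real_vector \<Rightarrow> 'a \<Rightarrow> real) \<Rightarrow> 'a set \<Rightarrow> 'a set" where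
  "orth_compl B L = {z. \<forall>h\<in>L. B z h = 0}"

definition pos_def_on :: "('a::real_vector \<Rightarrow> 'a \<Rightarrow> real) \<Rightarrow> 'a set \<Rightarrow> bool" where
  "pos_def_on B L \<longleftrightarrow> (\<forall>x\<in>L. x \<noteq> 0 \<longrightarrow> B x x > 0)"

definition pos_plane :: "('a::euclidean_space \<Rightarrow> 'a \<Rightarrow> real) \<Rightarrow> nat \<Rightarrow> 'a set \<Rightarrow> bool" where
  "pos_plane B r H \<longleftrightarrow> subspace H \<and> dim H = r \<and> pos_def_on B H"

definition line_sum :: "'a::real_vector set \<Rightarrow> 'a \<Rightarrow> 'a set" where
  "line_sum H z = {h + c *\<^sub>R z | h c. h \<in> H}"

definition extendable :: "('a::euclidean_space \<Rightarrow> 'a \<Rightarrow> real) \<Rightarrow> nat \<Rightarrow> 'a set \<Rightarrow> 'a set \<Rightarrow> bool" where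
  "extendable B k Z H \<longleftrightarrow> (\<exists>z\<in>Z. pos_plane B k (line_sum H z))"

definition orth_extendable :: "('a::euclidean_space \<Rightarrow> 'a \<Rightarrow> real) \<Rightarrow> nat \<Rightarrow> 'a set \<Rightarrow> 'a set \<Rightarrow> bool" where
  "orth_extendable B k Z H \<longleftrightarrow> (\<exists>z\<in>Z \<inter> orth_compl B H. pos_plane B k (line_sum H z))"

end

theory Submission imports Defs begin

lemma symD: "sym_form B \<Longrightarrow> B x y = B y x" by (simp add: sym_form_def)

lemma orth_span:
  assumes B: "bilinear B" and a: "\<forall>v\<in>S. B a v = 0" and x: "x \<in> span S"
  shows "B a x = 0"
proof -
  have "subspace {x. B a x = 0}"
    by (auto simp: subspace_def bilinear_rzero[OF B] bilinear_radd[OF B] bilinear_rmul[OF B])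
  from span_induct[OF x this] a show ?thesis by auto
qed

lemma quad_sum:
  assumes B: "bilinear B" and S: "sym_form B" and "finite E"
    and orth: "\<forall>e\<in>E. \<forall>f\<in>E. e \<noteq> f \<longrightarrow> B e f = 0"
  shows "B (\<Sum>v\<in>E. u v *\<^sub>R v) (\<Sum>v\<in>E. u v *\<^sub>R v) = (\<Sum>v\<in>E. (u v)^2 * B v v)"
  using assms(3,4)
proof (induction E rule: finite_induct)
  case empty show ?case using bilinear_lzero[OF B] by simp
next
  case (insert a E)
  let ?s = "\<Sum>v\<in>E. u v *\<^sub>R v"
  have s: "?s \<in> span E" by (intro span_sum span_scale span_base)
  have "\<forall>v\<in>E. B a v = 0" using insert.prems insert.hyps by auto
  then have o: "B a ?s = 0" using orth_span[OF B _ s] by blast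
  have o2: "B ?s a = 0" using o symD[OF S] by metis
  have IH: "B ?s ?s = (\<Sum>v\<in>E. (u v)^2 * B v v)" using insert.IH insert.prems by auto
  show ?case using insert.hyps
    by (simp add: bilinear_ladd[OF B] bilinear_radd[OF B] bilinear_lmul[OF B] bilinear_rmul[OF B] o o2 IH power2_eq_square algebra_simps)
qed

lemma diag_exists:
  fixes B :: "'a::euclidean_space \<Rightarrow> 'a \<Rightarrow> real"
  assumes B: "bilinear B" and S: "sym_form B" and L: "subspace L"
  shows "\<exists>E. diag_basis B L E"
  using L
proof (induction "dim L" arbitrary: L rule: less_induct)
  case less
  show ?case
  proof (cases "\<forall>x\<in>L. B x x = 0")
    case True
    have z: "B x y = 0" if "x \<in> L" "y \<in> L" for x y
    proof -
      have "x + y \<in> L" using that less.prems subspace_add by blast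
      then have "B (x+y) (x+y) = 0" using True by auto
      then show ?thesis using True that symD[OF S, of x y]
        by (simp add: bilinear_ladd[OF B] bilinear_radd[OF B])
    qed
    obtain E where E: "E \<subseteq> L" "independent E" "L \<subseteq> span E" "card E = dim L" by (rule basis_exists)
    have "span E = L" using E less.prems span_subspace by blast
    then show ?thesis unfolding diag_basis_def using E z True independent_bound[of E]
      by (intro exI[of _ E]) auto
  next
    case False
    then obtain x where x: "x \<in> L" "B x x \<noteq> 0" by auto
    define a where "a = (1 / sqrt \<bar>B x x\<bar>) *\<^sub>R x"
    have aL: "a \<in> L" unfolding a_def using x less.prems subspace_scale by blast
    have "B a a = (1 / sqrt \<bar>B x x\<bar>) * (1 / sqrt \<bar>B x x\<bar>) * B x x"
      unfolding a_def by (simp add: bilinear_lmul[OF B] bilinear_rmul[OF B])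
    also have "\<dots> = B x x / \<bar>B x x\<bar>" using x(2) by simp
    finally have aa: "B a a = 1 \<or> B a a = -1" using x(2) by (cases "B x x > 0") auto
    define L' where "L' = L \<inter> {y. B a y = 0}"
    have sL': "subspace L'" using less.prems unfolding L'_def subspace_def
      by (auto simp: bilinear_rzero[OF B] bilinear_radd[OF B] bilinear_rmul[OF B])
    have "L' \<subseteq> L" "a \<notin> L'" using aa by (auto simp: L'_def)
    have e1: "span L' = L'" and e2: "span L = L" using sL' less.prems by simp_all
    have "span L' \<subset> span L" unfolding e1 e2 using aL \<open>L' \<subseteq> L\<close> \<open>a \<notin> L'\<close> by blast
    then have "dim L' < dim L" using dim_psubset by (metis dim_span)
    then obtain E' where E': "diag_basis B L' E'" using less.hyps sL' by blast
    define E where "E = insert a E'"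
    have spE': "span E' = L'" using E' by (simp add: diag_basis_def)
    have "span E \<subseteq> L" unfolding E_def
      using spE' aL \<open>L' \<subseteq> L\<close> less.prems span_minimal[of "insert a E'" L] span_base[of _ E']
      by blast
    moreover have "L \<subseteq> span E"
    proof
      fix y assume y: "y \<in> L"
      have "y - (B a y / B a a) *\<^sub>R a \<in> L'" unfolding L'_def
        using y aL less.prems aa
        by (auto simp: bilinear_rsub[OF B] bilinear_rmul[OF B] subspace_diff subspace_scale)
      then show "y \<in> span E" unfolding E_def using span_breakdown_eq spE' by blast
    qed
    ultimately have spE: "span E = L" by blast
    have ind: "independent E" unfolding E_def using E' spE' \<open>a \<notin> L'\<close>
      by (simp add: diag_basis_def independent_insert)
    have orth: "\<forall>e\<in>E. \<forall>f\<in>E. e \<noteq> f \<longrightarrow> B e f = 0"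
    proof (intro ballI impI)
      fix e f assume ef: "e \<in> E" "f \<in> E" "e \<noteq> f"
      have sub: "E' \<subseteq> L'" using spE' span_base by blast
      show "B e f = 0"
      proof (cases "e = a")
        case True then show ?thesis using ef sub unfolding E_def L'_def by auto
      next
        case False
        show ?thesis
        proof (cases "f = a")
          case True then show ?thesis using ef False sub symD[OF S, of a e] unfolding E_def L'_def by auto
        next
          case False2: False
          then show ?thesis using ef False E' unfolding E_def diag_basis_def by auto
        qed
      qed
    qed
    have "finite E" using E' by (simp add: E_def diag_basis_def)
    moreover have "\<forall>e\<in>E. B e e \<in> {1, -1, 0}" using E' aa by (auto simp: E_def diag_basis_def)
    ultimately show ?thesis using spE ind orth unfolding diag_basis_def by blast
  qed
qed

lemma qplus_decomp:
  fixes B :: "'a::euclidean_space \<Rightarrow> 'a \<Rightarrow> real"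
  assumes B: "bilinear B" and S: "sym_form B" and L: "subspace L"
  shows "\<exists>P W. subspace P \<and> subspace W \<and> pos_def_on B P \<and> (\<forall>w\<in>W. B w w \<le> 0)
           \<and> dim P = qplus B L \<and> L = {x + y |x y. x \<in> P \<and> y \<in> W}"
proof -
  define E where "E = (SOME E. diag_basis B L E)"
  have E: "diag_basis B L E" unfolding E_def using diag_exists[OF B S L] by (rule someI_ex)
  define Pe where "Pe = {e \<in> E. B e e = 1}"
  define We where "We = E - Pe"
  have fin: "finite E" and ind: "independent E" and sp: "span E = L"
    and orth: "\<forall>e\<in>E. \<forall>f\<in>E. e \<noteq> f \<longrightarrow> B e f = 0" and vals: "\<forall>e\<in>E. B e e \<in> {1, -1, 0}"
    using E by (auto simp: diag_basis_def)
  have finP: "finite Pe" and finW: "finite We" using fin by (auto simp: Pe_def We_def)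
  have "independent Pe" using ind independent_mono[of E Pe] by (auto simp: Pe_def)
  then have "dim (span Pe) = card Pe" by (rule dim_span_eq_card_independent)
  then have dP: "dim (span Pe) = qplus B L"
    by (simp add: qplus_def E_def[symmetric] Pe_def)
  have pos: "pos_def_on B (span Pe)" unfolding pos_def_on_def
  proof (intro ballI impI)
    fix x assume x: "x \<in> span Pe" "x \<noteq> 0"
    obtain u where u: "x = (\<Sum>v\<in>Pe. u v *\<^sub>R v)" using x(1) span_finite[OF finP] by auto
    have q: "B x x = (\<Sum>v\<in>Pe. (u v)^2)" unfolding u
      by (subst quad_sum[OF B S finP]) (use orth in \<open>auto simp: Pe_def\<close>)
    obtain v where v: "v \<in> Pe" "u v \<noteq> 0"
    proof (rule ccontr)
      assume "\<not> thesis"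
      then have "\<forall>v\<in>Pe. u v = 0" using that by blast
      then have "x = 0" unfolding u by simp
      then show False using x by simp
    qed
    show "B x x > 0" unfolding q by (rule sum_pos2[OF finP v(1)]) (use v in auto)
  qed
  have neg: "\<forall>w\<in>span We. B w w \<le> 0"
  proof
    fix x assume x: "x \<in> span We"
    obtain u where u: "x = (\<Sum>v\<in>We. u v *\<^sub>R v)" using x(1) span_finite[OF finW] by auto
    have q: "B x x = (\<Sum>v\<in>We. (u v)^2 * B v v)" unfolding u
      by (subst quad_sum[OF B S finW]) (use orth in \<open>auto simp: We_def\<close>)
    have "\<forall>v\<in>We. B v v \<le> 0" using vals by (auto simp: We_def Pe_def)
    then have "\<forall>v\<in>We. (u v)^2 * B v v \<le> 0" by (simp add: mult_nonneg_nonpos)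
    then show "B x x \<le> 0" unfolding q by (simp add: sum_nonpos)
  qed
  have "E = Pe \<union> We" by (auto simp: Pe_def We_def)
  then have "L = {x + y |x y. x \<in> span Pe \<and> y \<in> span We}" using sp span_Un[of Pe We] by simp
  then show ?thesis using dP pos neg subspace_span by blast
qed

lemma posdim_le:
  fixes B :: "'a::euclidean_space \<Rightarrow> 'a \<Rightarrow> real"
  assumes U: "subspace U" "pos_def_on B U" and W: "subspace W" "\<forall>w\<in>W. B w w \<le> 0"
    and X: "subspace X" and sub: "U \<subseteq> {x + w |x w. x \<in> X \<and> w \<in> W}"
  shows "dim U \<le> dim X"
proof -
  have "U \<inter> W \<subseteq> {0}"
  proof
    fix x assume "x \<in> U \<inter> W"
    then have "x \<in> U" "x \<in> W" by auto
    then show "x \<in> {0}" using U(2) W(2) unfolding pos_def_on_def by (metis not_le singletonI)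
  qed
  then have d0: "dim (U \<inter> W) = 0" by simp
  have s1: "{x + y |x y. x \<in> U \<and> y \<in> W} \<subseteq> {x + w |x w. x \<in> X \<and> w \<in> W}"
  proof
    fix z assume "z \<in> {x + y |x y. x \<in> U \<and> y \<in> W}"
    then obtain u y where z: "z = u + y" "u \<in> U" "y \<in> W" by blast
    then obtain x w where "u = x + w" "x \<in> X" "w \<in> W" using sub by blast
    then have "z = x + (w + y)" "w + y \<in> W" using z W(1) subspace_add by (auto simp: algebra_simps)
    then show "z \<in> {x + w |x w. x \<in> X \<and> w \<in> W}" using \<open>x \<in> X\<close> by blast
  qed
  have "dim {x + y |x y. x \<in> U \<and> y \<in> W} \<le> dim {x + w |x w. x \<in> X \<and> w \<in> W}"
    using s1 dim_subset by blast
  then show ?thesis using dim_sums_Int[OF U(1) W(1)] dim_sums_Int[OF X W(1)] d0 by linarith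
qed

lemma orth_sub:
  fixes B :: "'a::euclidean_space \<Rightarrow> 'a \<Rightarrow> real"
  assumes B: "bilinear B"
  shows "subspace (orth_compl B H)"
  unfolding orth_compl_def subspace_def
  by (auto simp: bilinear_lzero[OF B] bilinear_ladd[OF B] bilinear_lmul[OF B])

lemma lsum:
  assumes B: "bilinear B" and "finite A"
  shows "B (\<Sum>f\<in>A. g f) e = (\<Sum>f\<in>A. B (g f) e)"
  using assms(2) by (induction A rule: finite_induct) (auto simp: bilinear_lzero[OF B] bilinear_ladd[OF B])

lemma orth_dim:
  fixes B :: "'a::euclidean_space \<Rightarrow> 'a \<Rightarrow> real"
  assumes B: "bilinear B" and S: "sym_form B" and H: "subspace H" "pos_def_on B H"
  shows "DIM('a) \<le> dim H + dim (orth_compl B H)"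
proof -
  obtain E where E: "diag_basis B H E" using diag_exists[OF B S H(1)] by blast
  have fin: "finite E" and ind: "independent E" and sp: "span E = H"
    and orth: "\<forall>e\<in>E. \<forall>f\<in>E. e \<noteq> f \<longrightarrow> B e f = 0" and vals: "\<forall>e\<in>E. B e e \<in> {1, -1, 0}"
    using E by (auto simp: diag_basis_def)
  have one: "B e e = 1" if "e \<in> E" for e
  proof -
    have "e \<in> H" using that sp span_base by blast
    moreover have "e \<noteq> 0" using ind that dependent_zero by blast
    ultimately have "B e e > 0" using H(2) by (auto simp: pos_def_on_def)
    then show ?thesis using vals that by auto
  qed
  have univ: "UNIV = {x + y |x y. x \<in> H \<and> y \<in> orth_compl B H}"
  proof (intro set_eqI iffI)
    fix x :: 'a
    define p where "p = (\<Sum>f\<in>E. B x f *\<^sub>R f)"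
    have "p \<in> span E" unfolding p_def by (intro span_sum span_scale span_base)
    then have pH: "p \<in> H" using sp by simp
    have "\<forall>e\<in>E. B (x - p) e = 0"
    proof
      fix e assume e: "e \<in> E"
      have "B p e = (\<Sum>f\<in>E. B x f * B f e)" unfolding p_def
        using lsum[OF B fin, of "\<lambda>f. B x f *\<^sub>R f" e]
        by (simp add: bilinear_lmul[OF B])
      also have "\<dots> = (\<Sum>f\<in>E. if f = e then B x e else 0)"
      proof (rule sum.cong)
        fix f assume f: "f \<in> E"
        show "B x f * B f e = (if f = e then B x e else 0)"
        proof (cases "f = e")
          case True then show ?thesis using one e by simp
        next
          case False then have "B f e = 0" using orth f e by blast
          then show ?thesis using False by simp
        qed
      qed simp
      also have "\<dots> = B x e" using fin e by simp
      finally show "B (x - p) e = 0" by (simp add: bilinear_lsub[OF B])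
    qed
    then have "\<forall>h\<in>H. B (x - p) h = 0" using orth_span[OF B, of E "x - p"] unfolding sp by blast
    then have "x - p \<in> orth_compl B H" by (simp add: orth_compl_def)
    then show "x \<in> {x + y |x y. x \<in> H \<and> y \<in> orth_compl B H}" using pH
      by (intro CollectI exI[of _ p] exI[of _ "x - p"]) simp
  qed simp
  show ?thesis using dim_sums_Int[OF H(1) orth_sub[OF B, of H]] univ[symmetric] by simp
qed

lemma find_orth:
  fixes B :: "'a::euclidean_space \<Rightarrow> 'a \<Rightarrow> real"
  assumes B: "bilinear B" and S: "sym_form B" and H: "subspace H" "pos_def_on B H"
    and Q: "subspace Q" and d: "dim H < dim Q"
  shows "\<exists>z\<in>Q. z \<noteq> 0 \<and> z \<in> orth_compl B H"
proof -
  have "dim {x + y |x y. x \<in> Q \<and> y \<in> orth_compl B H} \<le> dim (UNIV :: 'a set)"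
    by (rule dim_subset) simp
  then have "dim {x + y |x y. x \<in> Q \<and> y \<in> orth_compl B H} \<le> DIM('a)" by simp
  then have "dim (Q \<inter> orth_compl B H) \<noteq> 0"
    using dim_sums_Int[OF Q orth_sub[OF B, of H]] orth_dim[OF B S H] d by linarith
  then show ?thesis by auto
qed

lemma extend_line:
  fixes B :: "'a::euclidean_space \<Rightarrow> 'a \<Rightarrow> real"
  assumes B: "bilinear B" and S: "sym_form B" and H: "subspace H" "pos_def_on B H"
    and z: "z \<in> orth_compl B H" "B z z > 0"
  shows "subspace (line_sum H z) \<and> pos_def_on B (line_sum H z) \<and> dim (line_sum H z) = dim H + 1
         \<and> H \<subseteq> line_sum H z"
proof -
  have spH: "span H = H" using H(1) by simp
  have eq: "line_sum H z = span (insert z H)"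
  proof (intro set_eqI iffI)
    fix x assume "x \<in> line_sum H z"
    then obtain h c where "x = h + c *\<^sub>R z" "h \<in> H" by (auto simp: line_sum_def)
    then have "x - c *\<^sub>R z \<in> span H" using spH by (simp add: span_base)
    then show "x \<in> span (insert z H)" using span_breakdown_eq by blast
  next
    fix x assume "x \<in> span (insert z H)"
    then obtain c where "x - c *\<^sub>R z \<in> H" using span_breakdown_eq spH by blast
    then show "x \<in> line_sum H z" unfolding line_sum_def
      by (intro CollectI exI[of _ "x - c *\<^sub>R z"] exI[of _ c]) auto
  qed
  have zH: "z \<notin> H" using z by (auto simp: orth_compl_def)
  have zs: "z \<notin> span H" by (subst spH) (rule zH)
  have dim: "dim (line_sum H z) = dim H + 1" unfolding eq dim_span dim_insert using zs by simp
  have pos: "pos_def_on B (line_sum H z)" unfolding pos_def_on_def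
  proof (intro ballI impI)
    fix x assume "x \<in> line_sum H z" "x \<noteq> 0"
    then obtain h c where x: "x = h + c *\<^sub>R z" "h \<in> H" by (auto simp: line_sum_def)
    have o1: "B z h = 0" using z x(2) by (auto simp: orth_compl_def)
    have o2: "B h z = 0" using o1 symD[OF S] by metis
    have q: "B x x = B h h + c * c * B z z" unfolding x
      by (simp add: bilinear_ladd[OF B] bilinear_radd[OF B] bilinear_lmul[OF B] bilinear_rmul[OF B] o1 o2)
    have hh: "B h h \<ge> 0"
    proof (cases "h = 0")
      case True then show ?thesis by (simp add: bilinear_lzero[OF B])
    next
      case False
      then have "B h h > 0" using H(2) x(2) unfolding pos_def_on_def by blast
      then show ?thesis by simp
    qed
    show "B x x > 0"
    proof (cases "c = 0")
      case True then have "h \<noteq> 0" "B x x = B h h" using \<open>x \<noteq> 0\<close> x q by auto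
      then show ?thesis using H(2) x(2) unfolding pos_def_on_def by auto
    next
      case False then have "c * c > 0" by (metis mult_pos_pos mult_neg_neg neq_iff)
      then show ?thesis unfolding q using hh z(2) by (simp add: add_nonneg_pos)
    qed
  qed
  have "H \<subseteq> line_sum H z"
  proof
    fix x assume "x \<in> H"
    then show "x \<in> line_sum H z" unfolding line_sum_def
      by (intro CollectI exI[of _ x] exI[of _ "0::real"]) simp
  qed
  then show ?thesis using dim pos eq by simp
qed

lemma extend_to:
  fixes B :: "'a::euclidean_space \<Rightarrow> 'a \<Rightarrow> real"
  assumes B: "bilinear B" and S: "sym_form B" and Q: "subspace Q" "pos_def_on B Q"
  shows "subspace P \<Longrightarrow> pos_def_on B P \<Longrightarrow> dim P + d \<le> dim Q \<Longrightarrow>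
         \<exists>H. P \<subseteq> H \<and> subspace H \<and> pos_def_on B H \<and> dim H = dim P + d"
proof (induction d arbitrary: P)
  case 0 then show ?case by auto
next
  case (Suc d)
  then have "dim P < dim Q" by simp
  then obtain z where z: "z \<in> Q" "z \<noteq> 0" "z \<in> orth_compl B P"
    using find_orth[OF B S Suc.prems(1,2) Q(1)] by blast
  have zz: "B z z > 0" using Q(2) z unfolding pos_def_on_def by blast
  note L = extend_line[OF B S Suc.prems(1,2) z(3) zz]
  have "dim (line_sum P z) + d \<le> dim Q" using L Suc.prems(3) by simp
  then obtain H where H: "line_sum P z \<subseteq> H" "subspace H" "pos_def_on B H" "dim H = dim (line_sum P z) + d"
    using Suc.IH[of "line_sum P z"] L by blast
  have "P \<subseteq> H" using H(1) L by blast
  moreover have "dim H = dim P + Suc d" using H(4) L by simp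
  ultimately show ?case using H(2,3) by blast
qed

theorem proposition3:
  fixes B :: "'a::euclidean_space \<Rightarrow> 'a \<Rightarrow> real" and k l :: nat and Z :: "'a set"
  assumes "bilinear B" and "sym_form B" and "nondegenerate B"
    and "qplus B UNIV = k" and "qminus B UNIV = l"
    and "k \<ge> 2" and "l \<ge> 2"
    and "subspace Z"
  shows "(qplus B Z = k \<longleftrightarrow> (\<forall>H. pos_plane B (k - 1) H \<longrightarrow> extendable B k Z H))
       \<and> ((\<forall>H. pos_plane B (k - 1) H \<longrightarrow> extendable B k Z H) \<longleftrightarrow>
          (\<forall>H. pos_plane B (k - 1) H \<longrightarrow> orth_extendable B k Z H))"
proof -
  note B = assms(1) and S = assms(2) and Zs = assms(8)
  obtain Pv Wv where V: "subspace Pv" "subspace Wv" "pos_def_on B Pv" "\<forall>w\<in>Wv. B w w \<le> 0"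
    "dim Pv = qplus B UNIV" "UNIV = {x + y |x y. x \<in> Pv \<and> y \<in> Wv}"
    using qplus_decomp[OF B S subspace_UNIV] by blast
  have le_k: "dim U \<le> k" if "subspace U" "pos_def_on B U" for U
    using posdim_le[OF that V(2,4,1)] V(5,6) assms(4) by simp
  obtain Pz Wz where Zd: "subspace Pz" "subspace Wz" "pos_def_on B Pz" "\<forall>w\<in>Wz. B w w \<le> 0"
    "dim Pz = qplus B Z" "Z = {x + y |x y. x \<in> Pz \<and> y \<in> Wz}"
    using qplus_decomp[OF B S Zs] by blast
  have PzZ: "Pz \<subseteq> Z"
  proof
    fix p assume "p \<in> Pz"
    moreover have "(0::'a) \<in> Wz" using Zd(2) subspace_0 by blast
    ultimately have "p + 0 \<in> {x + y |x y. x \<in> Pz \<and> y \<in> Wz}" by blast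
    then show "p \<in> Z" using Zd(6) by simp
  qed
  have i_iii: "\<forall>H. pos_plane B (k - 1) H \<longrightarrow> orth_extendable B k Z H" if q: "qplus B Z = k"
  proof (intro allI impI)
    fix H assume H: "pos_plane B (k - 1) H"
    then have Hs: "subspace H" "pos_def_on B H" "dim H = k - 1" by (auto simp: pos_plane_def)
    have "dim H < dim Pz" using Hs(3) Zd(5) q assms(6) by simp
    then obtain z where z: "z \<in> Pz" "z \<noteq> 0" "z \<in> orth_compl B H"
      using find_orth[OF B S Hs(1,2) Zd(1)] by blast
    have zz: "B z z > 0" using Zd(3) z unfolding pos_def_on_def by blast
    note L = extend_line[OF B S Hs(1,2) z(3) zz]
    then have "pos_plane B k (line_sum H z)" using Hs(3) assms(6) by (auto simp: pos_plane_def)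
    then show "orth_extendable B k Z H" unfolding orth_extendable_def using z PzZ by blast
  qed
  have iii_ii: "\<forall>H. pos_plane B (k - 1) H \<longrightarrow> extendable B k Z H"
    if "\<forall>H. pos_plane B (k - 1) H \<longrightarrow> orth_extendable B k Z H"
    using that unfolding extendable_def orth_extendable_def by blast
  have ii_i: "qplus B Z = k" if ext: "\<forall>H. pos_plane B (k - 1) H \<longrightarrow> extendable B k Z H"
  proof (rule ccontr)
    assume ne: "qplus B Z \<noteq> k"
    have "dim Pz \<le> k" using le_k[OF Zd(1,3)] .
    then have lt: "dim Pz + (k - 1 - dim Pz) \<le> dim Pv" using ne Zd(5) V(5) assms(4) by simp
    obtain H where H: "Pz \<subseteq> H" "subspace H" "pos_def_on B H" "dim H = dim Pz + (k - 1 - dim Pz)"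
      using extend_to[OF B S V(1,3) Zd(1,3) lt] by blast
    have dH: "dim H = k - 1" using H(4) ne Zd(5) \<open>dim Pz \<le> k\<close> by simp
    then have "pos_plane B (k - 1) H" using H by (simp add: pos_plane_def)
    then obtain z where z: "z \<in> Z" "pos_plane B k (line_sum H z)"
      using ext unfolding extendable_def by blast
    obtain p w where pw: "z = p + w" "p \<in> Pz" "w \<in> Wz" using z(1) Zd(6) by blast
    have sub: "line_sum H z \<subseteq> {x + w |x w. x \<in> H \<and> w \<in> Wz}"
    proof
      fix y assume "y \<in> line_sum H z"
      then obtain h c where y: "y = h + c *\<^sub>R z" "h \<in> H" by (auto simp: line_sum_def)
      have "p \<in> H" using pw(2) H(1) by blast
      then have "h + c *\<^sub>R p \<in> H" using y(2) H(2) by (simp add: subspace_add subspace_scale)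
      moreover have "c *\<^sub>R w \<in> Wz" using pw(3) Zd(2) by (simp add: subspace_scale)
      moreover have "y = (h + c *\<^sub>R p) + c *\<^sub>R w" using y(1) pw(1) by (simp add: algebra_simps)
      ultimately show "y \<in> {x + w |x w. x \<in> H \<and> w \<in> Wz}" by blast
    qed
    have ls: "subspace (line_sum H z)" "pos_def_on B (line_sum H z)"
      using z(2) by (auto simp: pos_plane_def)
    have "dim (line_sum H z) \<le> dim H"
      using posdim_le[OF ls Zd(2,4) H(2) sub] .
    then show False using z(2) dH assms(6) by (simp add: pos_plane_def)
  qed
  show ?thesis using i_iii iii_ii ii_i by blast
qed

end
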